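(* Let $n\ge2$, $C>0$, let $x\in\mathcal{K}_{S+}$ with $x_1\le\dots\le x_n$, and let $\tilde{x}=x+\eta$ with $\eta\sim\mathcal{N}(0,\sigma^2I_n)$, $\sigma>0$. Set $a=\frac{1}{\sigma}\sqrt{\frac{n}{n-1}}$. Then $$\mathcal{B}((\pi_S)_+)_1-\mathcal{B}((\pi_S)_+)_n=\int_{-x_n}^{-x_1}\Phi(at)\,dt\ \in\ \big[\Phi(-ax_n)(x_n-x_1),\ \Phi(-ax_1)(x_n-x_1)\big],$$ where $\Phi$ is the standard Gaussian cumulative distribution function.
   Context: $\mathcal{K}_S=\{v\in\mathbb{R}^n:\sum_i v_i=C\}$, $\mathcal{K}_{S+}=\{v\in\mathcal{K}_S:v\ge0\}$, $\pi_S$ is the Euclidean projection onto $\mathcal{K}_S$ (so $\pi_S(\tilde{x})_i=\tilde{x}_i+(C-\sum_j\tilde{x}_j)/n$). $(y)_+=\max\{y,0\}$ componentwise, and $\mathcal{B}((\pi_S)_+)=\mathbb{E}_{\tilde{x}}[(\pi_S(\tilde{x}))_+]-x$. *)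

theory Defs
  imports "HOL-Probability.Probability"
begin

text \<open>Vectors in R^n are functions nat => real, only indices 0..n-1 matter
  (paper index i corresponds to i-1 here).\<close>

definition proj_S :: "real \<Rightarrow> nat \<Rightarrow> (nat \<Rightarrow> real) \<Rightarrow> (nat \<Rightarrow> real)" where
  "proj_S C n v = (\<lambda>i. v i + (C - (\<Sum>j<n. v j)) / real n)"

definition gauss_noise :: "nat \<Rightarrow> real \<Rightarrow> (nat \<Rightarrow> real) measure" where
  "gauss_noise n \<sigma> = PiM {..<n} (\<lambda>i. density lborel (normal_density 0 \<sigma>))"

definition bias_proj_pos :: "real \<Rightarrow> nat \<Rightarrow> real \<Rightarrow> (nat \<Rightarrow> real) \<Rightarrow> nat \<Rightarrow> real" where
  "bias_proj_pos C n \<sigma> x i =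
     (\<integral>\<eta>. max 0 (proj_S C n (\<lambda>j. x j + \<eta> j) i) \<partial>gauss_noise n \<sigma>) - x i"

definition Phi :: "real \<Rightarrow> real" where
  "Phi t = measure (density lborel std_normal_density) {..t}"

end

theory Submission
  imports Defs
begin


lemma gauss_prob: "\<sigma> > 0 \<Longrightarrow> prob_space (gauss_noise n \<sigma>)"
  unfolding gauss_noise_def by (intro prob_space_PiM prob_space_normal_density)

lemma coord_distr:
  assumes "j < n" "\<sigma> > 0"
  shows "distributed (gauss_noise n \<sigma>) lborel (\<lambda>\<omega>. \<omega> j) (normal_density 0 \<sigma>)"
proof -
  interpret P: product_prob_space "\<lambda>_. density lborel (normal_density 0 \<sigma>)" "{..<n}"
    using prob_space_normal_density[of \<sigma> 0] assms by (simp add: product_prob_space_def product_prob_space_axioms_def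
        product_sigma_finite_def prob_space_imp_sigma_finite)
  have "distr (gauss_noise n \<sigma>) lborel (\<lambda>\<omega>. \<omega> j) = distr (gauss_noise n \<sigma>) (density lborel (normal_density 0 \<sigma>)) (\<lambda>\<omega>. \<omega> j)"
    by (rule distr_cong) auto
  also have "\<dots> = density lborel (normal_density 0 \<sigma>)"
    unfolding gauss_noise_def using assms by (intro P.PiM_component) auto
  finally show ?thesis unfolding distributed_def using assms
    by (auto simp: gauss_noise_def)
qed

lemma coord_meas: "i < n \<Longrightarrow> (\<lambda>\<omega>. \<omega> i) \<in> measurable (gauss_noise n \<sigma>) (density lborel (normal_density 0 \<sigma>))"
  unfolding gauss_noise_def by (rule measurable_component_singleton) simp

lemma coord_indep:
  assumes "\<sigma> > 0"
  shows "prob_space.indep_vars (gauss_noise n \<sigma>) (\<lambda>_. borel) (\<lambda>j \<omega>. \<omega> j) {..<n}"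
proof (cases "n = 0")
  case True
  then show ?thesis using gauss_prob[of \<sigma> n] assms by (simp add: prob_space.indep_vars_def prob_space.indep_sets_def)
next
  case False
  interpret M: prob_space "gauss_noise n \<sigma>" by (rule gauss_prob[OF assms])
  have "M.indep_vars (\<lambda>_. density lborel (normal_density 0 \<sigma>)) (\<lambda>j \<omega>. \<omega> j) {..<n}"
  proof (subst M.indep_vars_iff_distr_eq_PiM')
    show "{..<n} \<noteq> {}" using False by auto
    show "\<And>i. i \<in> {..<n} \<Longrightarrow> (\<lambda>\<omega>. \<omega> i) \<in> measurable (gauss_noise n \<sigma>) (density lborel (normal_density 0 \<sigma>))"
    proof -
      fix i assume "i \<in> {..<n}"
      then show "(\<lambda>\<omega>. \<omega> i) \<in> measurable (gauss_noise n \<sigma>) (density lborel (normal_density 0 \<sigma>))"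
        using coord_meas[of i n \<sigma>] by auto
    qed
    have 1: "distr (gauss_noise n \<sigma>) (density lborel (normal_density 0 \<sigma>)) (\<lambda>\<omega>. \<omega> i) = density lborel (normal_density 0 \<sigma>)" if "i \<in> {..<n}" for i
    proof -
      have "distr (gauss_noise n \<sigma>) (density lborel (normal_density 0 \<sigma>)) (\<lambda>\<omega>. \<omega> i) = distr (gauss_noise n \<sigma>) lborel (\<lambda>\<omega>. \<omega> i)"
        by (rule distr_cong) auto
      then show ?thesis using distributed_distr_eq_density[OF coord_distr[of i n \<sigma>]] that assms by simp
    qed
    have 2: "distr (gauss_noise n \<sigma>) (\<Pi>\<^sub>M i\<in>{..<n}. density lborel (normal_density 0 \<sigma>)) (\<lambda>x. \<lambda>i\<in>{..<n}. x i)
        = distr (gauss_noise n \<sigma>) (gauss_noise n \<sigma>) (\<lambda>x. x)"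
      by (rule distr_cong) (auto simp: gauss_noise_def space_PiM PiE_def extensional_def restrict_def fun_eq_iff)
    show "distr (gauss_noise n \<sigma>) (\<Pi>\<^sub>M i\<in>{..<n}. density lborel (normal_density 0 \<sigma>)) (\<lambda>x. \<lambda>i\<in>{..<n}. x i) =
      (\<Pi>\<^sub>M i\<in>{..<n}. distr (gauss_noise n \<sigma>) (density lborel (normal_density 0 \<sigma>)) (\<lambda>\<omega>. \<omega> i))"
      unfolding 2 distr_id unfolding gauss_noise_def
      by (rule PiM_cong) (use 1 in \<open>auto simp: gauss_noise_def\<close>)
  qed
  then show ?thesis
    by (simp add: M.indep_vars_def)
qed

lemma xi_distr:
  assumes n: "n \<ge> 2" and s: "\<sigma> > 0" and i: "i < n"
  shows "distributed (gauss_noise n \<sigma>) lborel (\<lambda>\<omega>. \<omega> i - (\<Sum>j<n. \<omega> j) / real n)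
           (normal_density 0 (\<sigma> * sqrt ((real n - 1) / real n)))"
proof -
  interpret M: prob_space "gauss_noise n \<sigma>" by (rule gauss_prob[OF s])
  define c where "c j = (if j = i then 1 else 0) - 1 / real n" for j
  have cnz: "c j \<noteq> 0" for j
    using n by (auto simp: c_def field_simps)
  have d: "distributed (gauss_noise n \<sigma>) lborel (\<lambda>\<omega>. c j * \<omega> j) (normal_density 0 (\<bar>c j\<bar> * \<sigma>))"
    if "j \<in> {..<n}" for j
    using M.normal_density_affine[OF coord_distr[of j n \<sigma>] s cnz[of j], of 0] that s by simp
  have ind: "M.indep_vars (\<lambda>_. borel) (\<lambda>j \<omega>. c j * \<omega> j) {..<n}"
    by (rule M.indep_vars_compose2[OF coord_indep[OF s]]) auto
  have pos: "\<And>j. j \<in> {..<n} \<Longrightarrow> 0 < \<bar>c j\<bar> * \<sigma>" using cnz s by auto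
  have "distributed (gauss_noise n \<sigma>) lborel (\<lambda>\<omega>. \<Sum>j\<in>{..<n}. c j * \<omega> j)
     (normal_density (\<Sum>j\<in>{..<n}. 0) (sqrt (\<Sum>j\<in>{..<n}. (\<bar>c j\<bar> * \<sigma>)\<^sup>2)))"
    by (rule M.sum_indep_normal[OF _ _ ind pos d]) (use n in \<open>auto simp: lessThan_empty_iff\<close>)
  moreover have "(\<lambda>\<omega>. \<Sum>j\<in>{..<n}. c j * \<omega> j) = (\<lambda>\<omega>. \<omega> i - (\<Sum>j<n. \<omega> j) / real n)"
  proof
    fix \<omega> :: "nat \<Rightarrow> real"
    have "(\<Sum>j\<in>{..<n}. c j * \<omega> j) = (\<Sum>j\<in>{..<n}. (if j = i then \<omega> j else 0)) - (\<Sum>j\<in>{..<n}. \<omega> j / real n)"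
      unfolding sum_subtractf[symmetric] by (rule sum.cong) (auto simp: c_def algebra_simps)
    also have "\<dots> = \<omega> i - (\<Sum>j<n. \<omega> j) / real n"
      using i by (simp add: sum_divide_distrib)
    finally show "(\<Sum>j\<in>{..<n}. c j * \<omega> j) = \<omega> i - (\<Sum>j<n. \<omega> j) / real n" .
  qed
  moreover have "sqrt (\<Sum>j\<in>{..<n}. (\<bar>c j\<bar> * \<sigma>)\<^sup>2) = \<sigma> * sqrt ((real n - 1) / real n)"
  proof -
    have "(\<Sum>j\<in>{..<n}. (\<bar>c j\<bar> * \<sigma>)\<^sup>2) = \<sigma>\<^sup>2 * (\<Sum>j\<in>{..<n}. (c j)\<^sup>2)"
      by (simp add: sum_distrib_left power_mult_distrib mult.commute)
    also have "(\<Sum>j\<in>{..<n}. (c j)\<^sup>2) = (c i)\<^sup>2 + (\<Sum>j\<in>{..<n} - {i}. (c j)\<^sup>2)"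
      using i by (simp add: sum.remove)
    also have "(\<Sum>j\<in>{..<n} - {i}. (c j)\<^sup>2) = (\<Sum>j\<in>{..<n} - {i}. (1 / real n)\<^sup>2)"
      by (rule sum.cong) (auto simp: c_def)
    also have "\<dots> = (real n - 1) * (1 / real n)\<^sup>2"
      using i by (simp add: of_nat_diff)
    also have "(c i)\<^sup>2 + (real n - 1) * (1 / real n)\<^sup>2 = (real n - 1) / real n"
      using n by (simp add: c_def field_simps power2_eq_square)
    finally have "(\<Sum>j\<in>{..<n}. (\<bar>c j\<bar> * \<sigma>)\<^sup>2) = \<sigma>\<^sup>2 * ((real n - 1) / real n)" .
    then show ?thesis using s by (simp only: real_sqrt_mult real_sqrt_abs)
  qed
  ultimately show ?thesis by simp
qed



lemma nd_scale: "s > 0 \<Longrightarrow> s * normal_density 0 s (s * z) = normal_density 0 1 z"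
  by (simp add: normal_density_def real_sqrt_mult power_mult_distrib field_simps)

lemma Phi_emeasure:
  assumes s: "s > 0"
  shows "emeasure (density lborel (normal_density 0 s)) {..t} = ennreal (Phi (t / s))"
proof -
  have "emeasure (density lborel (normal_density 0 s)) {..t} =
      (\<integral>\<^sup>+y. ennreal (normal_density 0 s y) * indicator {..t} y \<partial>lborel)"
    by (rule emeasure_density) auto
  also have "\<dots> = ennreal \<bar>s\<bar> * (\<integral>\<^sup>+z. ennreal (normal_density 0 s (0 + s * z)) * indicator {..t} (0 + s * z) \<partial>lborel)"
    by (rule nn_integral_real_affine) (use s in auto)
  also have "\<dots> = (\<integral>\<^sup>+z. ennreal (normal_density 0 1 z) * indicator {..t/s} z \<partial>lborel)"
  proof -
    have "ennreal \<bar>s\<bar> * (\<integral>\<^sup>+z. ennreal (normal_density 0 s (0 + s * z)) * indicator {..t} (0 + s * z) \<partial>lborel)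
      = (\<integral>\<^sup>+z. ennreal \<bar>s\<bar> * (ennreal (normal_density 0 s (0 + s * z)) * indicator {..t} (0 + s * z)) \<partial>lborel)"
      by (rule nn_integral_cmult[symmetric]) auto
    also have "\<dots> = (\<integral>\<^sup>+z. ennreal (normal_density 0 1 z) * indicator {..t/s} z \<partial>lborel)"
    proof (rule nn_integral_cong)
      fix z :: real
      have "ennreal \<bar>s\<bar> * ennreal (normal_density 0 s (0 + s * z)) = ennreal (normal_density 0 1 z)"
        using s nd_scale[OF s, of z] by (simp add: ennreal_mult[symmetric])
      moreover have "indicator {..t} (0 + s * z) = (indicator {..t/s} z :: ennreal)"
        using s by (simp add: indicator_def pos_le_divide_eq mult.commute)
      ultimately show "ennreal \<bar>s\<bar> * (ennreal (normal_density 0 s (0 + s * z)) * indicator {..t} (0 + s * z)) =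
          ennreal (normal_density 0 1 z) * indicator {..t/s} z"
        by (simp add: mult.assoc[symmetric])
    qed
    finally show ?thesis .
  qed
  also have "\<dots> = emeasure (density lborel (normal_density 0 1)) {..t/s}"
    by (rule emeasure_density[symmetric]) auto
  also have "\<dots> = ennreal (Phi (t / s))"
    unfolding Phi_def using prob_space_normal_density[of 1 0]
    by (simp add: finite_measure.emeasure_eq_measure prob_space.finite_measure)
  finally show ?thesis .
qed



lemma Phi_mono: "x \<le> y \<Longrightarrow> Phi x \<le> Phi y"
  unfolding Phi_def
  by (rule finite_measure.finite_measure_mono[OF prob_space.finite_measure[OF prob_space_normal_density]]) auto

lemma Phi_nonneg: "0 \<le> Phi x"
  unfolding Phi_def by simp

lemma Phi_le1: "Phi x \<le> 1"
  unfolding Phi_def by (rule prob_space.prob_le_1[OF prob_space_normal_density]) simp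

lemma Phi_scaled_meas:
  assumes "s > 0" shows "(\<lambda>t. Phi (t / s)) \<in> borel_measurable borel"
  by (rule borel_measurable_mono) (use assms in \<open>auto simp: mono_def divide_right_mono intro!: Phi_mono\<close>)

lemma integrable_pos_part:
  assumes s: "s > 0"
  shows "integrable (density lborel (normal_density 0 s)) (\<lambda>y. max 0 (c + y))"
proof -
  have "integrable lborel (\<lambda>y. normal_density 0 s y *\<^sub>R max 0 (c + y))"
  proof (rule Bochner_Integration.integrable_bound)
    show "integrable lborel (\<lambda>y. \<bar>c\<bar> * normal_density 0 s y + normal_density 0 s y * \<bar>y - 0\<bar> ^ 1)"
      using integrable_normal_moment_abs[OF s, of 0 1] integrable_normal_density[OF s, where \<mu>=0]
      by (intro Bochner_Integration.integrable_add Bochner_Integration.integrable_mult_right) auto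
    show "(\<lambda>y. normal_density 0 s y *\<^sub>R max 0 (c + y)) \<in> borel_measurable lborel" by simp
    show "AE y in lborel. norm (normal_density 0 s y *\<^sub>R max 0 (c + y)) \<le> norm (\<bar>c\<bar> * normal_density 0 s y + normal_density 0 s y * \<bar>y - 0\<bar> ^ 1)"
    proof (rule AE_I2)
      fix y
      have p: "0 \<le> normal_density 0 s y" by simp
      have "max 0 (c + y) \<le> \<bar>c\<bar> + \<bar>y\<bar>" by auto
      then have "normal_density 0 s y * max 0 (c + y) \<le> normal_density 0 s y * (\<bar>c\<bar> + \<bar>y\<bar>)"
        by (rule mult_left_mono[OF _ p])
      then show "norm (normal_density 0 s y *\<^sub>R max 0 (c + y)) \<le> norm (\<bar>c\<bar> * normal_density 0 s y + normal_density 0 s y * \<bar>y - 0\<bar> ^ 1)"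
        using p by (simp add: algebra_simps abs_mult)
    qed
  qed
  then show ?thesis
    by (subst integrable_density) auto
qed



lemma h_emeasure:
  fixes u v y :: real assumes "u \<le> v"
  shows "ennreal (max 0 (u + y) - u - (max 0 (v + y) - v)) = (\<integral>\<^sup>+t. indicator {-v..-u} t * indicator {..t} y \<partial>lborel)"
proof -
  have "(\<integral>\<^sup>+t. indicator {-v..-u} t * indicator {..t} y \<partial>lborel) = (\<integral>\<^sup>+t. indicator ({-v..-u} \<inter> {y..}) t \<partial>lborel)"
    by (rule nn_integral_cong) (auto simp: indicator_def)
  also have "\<dots> = emeasure lborel ({-v..-u} \<inter> {y..})" by simp
  finally have eq: "(\<integral>\<^sup>+t. indicator {-v..-u} t * indicator {..t} y \<partial>lborel) = emeasure lborel ({-v..-u} \<inter> {y..})" .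
  show ?thesis
  proof (cases "y \<le> -u")
    case True
    have "{-v..-u} \<inter> {y..} = {max (-v) y .. -u}" by auto
    then show ?thesis unfolding eq using True assms
      by (simp add: max_def)
  next
    case False
    have "{-v..-u} \<inter> {y..} = {}" using False by auto
    then show ?thesis unfolding eq using False assms by (simp add: max_def)
  qed
qed

lemma key:
  fixes s u v :: real
  assumes s: "s > 0" and uv: "u \<le> v"
  shows "((\<integral>y. max 0 (u + y) \<partial>density lborel (normal_density 0 s)) - u)
       - ((\<integral>y. max 0 (v + y) \<partial>density lborel (normal_density 0 s)) - v)
       = (LBINT t:{-v..-u}. Phi (t / s))"
proof -
  define N where "N = density lborel (normal_density 0 s)"
  interpret N: prob_space N unfolding N_def by (rule prob_space_normal_density[OF s])
  define h where "h y = max 0 (u + y) - u - (max 0 (v + y) - v)" for y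
  have iu: "integrable N (\<lambda>y. max 0 (u + y))" unfolding N_def by (rule integrable_pos_part[OF s])
  have iv: "integrable N (\<lambda>y. max 0 (v + y))" unfolding N_def by (rule integrable_pos_part[OF s])
  have ih: "integrable N h" unfolding h_def using iu iv by auto
  have h0: "0 \<le> h y" for y unfolding h_def using uv by (auto simp: max_def)
  have lhs: "((\<integral>y. max 0 (u + y) \<partial>N) - u) - ((\<integral>y. max 0 (v + y) \<partial>N) - v) = (\<integral>y. h y \<partial>N)"
    unfolding h_def using iu iv by (simp add: Bochner_Integration.integral_diff N.prob_space)
  have mPhi[measurable]: "(\<lambda>t. Phi (t / s)) \<in> borel_measurable borel" by (rule Phi_scaled_meas[OF s])
  have iP: "integrable lborel (\<lambda>t. indicator {-v..-u} t * Phi (t / s))"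
  proof (rule Bochner_Integration.integrable_bound)
    show "integrable lborel (indicator {-v..-u} :: real \<Rightarrow> real)" by (simp add: uv)
    show "(\<lambda>t. indicator {-v..-u} t * Phi (t / s)) \<in> borel_measurable lborel" by simp
    show "AE t in lborel. norm (indicator {-v..-u} t * Phi (t / s)) \<le> norm (indicator {-v..-u} t :: real)"
      by (rule AE_I2) (auto simp: indicator_def Phi_le1 Phi_nonneg abs_of_nonneg)
  qed
  have "ennreal (\<integral>y. h y \<partial>N) = (\<integral>\<^sup>+y. ennreal (h y) \<partial>N)"
    by (rule nn_integral_eq_integral[symmetric]) (use ih h0 in auto)
  also have "\<dots> = (\<integral>\<^sup>+y. ennreal (normal_density 0 s y) * ennreal (h y) \<partial>lborel)"
    unfolding N_def by (subst nn_integral_density) (auto simp: h_def)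
  also have "\<dots> = (\<integral>\<^sup>+y. (\<integral>\<^sup>+t. ennreal (normal_density 0 s y) * (indicator {-v..-u} t * indicator {..t} y) \<partial>lborel) \<partial>lborel)"
  proof (rule nn_integral_cong)
    fix y :: real
    have m: "(\<lambda>t. indicator {-v..-u} t * indicator {..t} y :: ennreal) \<in> borel_measurable lborel"
    proof -
      have "(\<lambda>t. indicator {-v..-u} t * indicator {..t} y :: ennreal) = (\<lambda>t. indicator {-v..-u} t * indicator {y..} t)"
        by (auto simp: indicator_def)
      then show ?thesis by simp
    qed
    show "ennreal (normal_density 0 s y) * ennreal (h y) = (\<integral>\<^sup>+t. ennreal (normal_density 0 s y) * (indicator {-v..-u} t * indicator {..t} y) \<partial>lborel)"
      by (subst nn_integral_cmult[OF m]) (simp add: h_def h_emeasure[OF uv])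
  qed
  also have "\<dots> = (\<integral>\<^sup>+t. (\<integral>\<^sup>+y. ennreal (normal_density 0 s y) * (indicator {-v..-u} t * indicator {..t} y) \<partial>lborel) \<partial>lborel)"
  proof (rule lborel_pair.Fubini')
    have "(\<lambda>p::real\<times>real. ennreal (normal_density 0 s (snd p)) * (indicator {-v..-u} (fst p) * indicator {..fst p} (snd p)))
       = (\<lambda>p. ennreal (normal_density 0 s (snd p)) * (indicator {-v..-u} (fst p) * (if snd p \<le> fst p then 1 else 0)))"
      by (auto simp: indicator_def)
    moreover have "(\<lambda>p::real\<times>real. ennreal (normal_density 0 s (snd p)) * (indicator {-v..-u} (fst p) * (if snd p \<le> fst p then 1 else 0))) \<in> borel_measurable (lborel \<Otimes>\<^sub>M lborel)"
      by measurable
    ultimately show "(\<lambda>(t, y). ennreal (normal_density 0 s y) * (indicator {-v..-u} t * indicator {..t} y)) \<in> borel_measurable (lborel \<Otimes>\<^sub>M lborel)"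
      by (simp add: case_prod_unfold)
  qed
  also have "\<dots> = (\<integral>\<^sup>+t. indicator {-v..-u} t * emeasure N {..t} \<partial>lborel)"
  proof (rule nn_integral_cong)
    fix t :: real
    have "(\<integral>\<^sup>+y. ennreal (normal_density 0 s y) * (indicator {-v..-u} t * indicator {..t} y) \<partial>lborel)
        = (\<integral>\<^sup>+y. indicator {-v..-u} t * (ennreal (normal_density 0 s y) * indicator {..t} y) \<partial>lborel)"
      by (rule nn_integral_cong) (simp add: ac_simps)
    also have "\<dots> = indicator {-v..-u} t * (\<integral>\<^sup>+y. ennreal (normal_density 0 s y) * indicator {..t} y \<partial>lborel)"
      by (rule nn_integral_cmult) simp
    also have "(\<integral>\<^sup>+y. ennreal (normal_density 0 s y) * indicator {..t} y \<partial>lborel) = emeasure N {..t}"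
      unfolding N_def by (rule emeasure_density[symmetric]) auto
    finally show "(\<integral>\<^sup>+y. ennreal (normal_density 0 s y) * (indicator {-v..-u} t * indicator {..t} y) \<partial>lborel)
        = indicator {-v..-u} t * emeasure N {..t}" .
  qed
  also have "\<dots> = (\<integral>\<^sup>+t. ennreal (indicator {-v..-u} t * Phi (t / s)) \<partial>lborel)"
    by (rule nn_integral_cong) (auto simp: N_def Phi_emeasure[OF s] indicator_def)
  also have "\<dots> = ennreal (\<integral>t. indicator {-v..-u} t * Phi (t / s) \<partial>lborel)"
    by (rule nn_integral_eq_integral[OF iP]) (auto simp: indicator_def Phi_nonneg)
  finally have "(\<integral>y. h y \<partial>N) = (\<integral>t. indicator {-v..-u} t * Phi (t / s) \<partial>lborel)"
    by (subst (asm) ennreal_inj) (auto intro!: integral_nonneg_AE h0 simp: indicator_def Phi_nonneg)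
  then show ?thesis using lhs unfolding N_def set_lebesgue_integral_def by simp
qed



lemma bias_eq:
  assumes n: "n \<ge> 2" and s: "\<sigma> > 0" and i: "i < n" and sx: "(\<Sum>i<n. x i) = C"
  shows "bias_proj_pos C n \<sigma> x i =
    (\<integral>y. max 0 (x i + y) \<partial>density lborel (normal_density 0 (\<sigma> * sqrt ((real n - 1) / real n)))) - x i"
proof -
  let ?\<xi> = "\<lambda>\<omega>::nat\<Rightarrow>real. \<omega> i - (\<Sum>j<n. \<omega> j) / real n"
  have D: "distributed (gauss_noise n \<sigma>) lborel ?\<xi> (normal_density 0 (\<sigma> * sqrt ((real n - 1) / real n)))"
    by (rule xi_distr[OF n s i])
  have pe: "proj_S C n (\<lambda>j. x j + \<eta> j) i = x i + ?\<xi> \<eta>" for \<eta>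
  proof -
    have "(\<Sum>j<n. x j + \<eta> j) = C + (\<Sum>j<n. \<eta> j)" using sx by (simp add: sum.distrib)
    then show ?thesis unfolding proj_S_def by (simp add: diff_divide_distrib)
  qed
  have "(\<integral>\<eta>. max 0 (proj_S C n (\<lambda>j. x j + \<eta> j) i) \<partial>gauss_noise n \<sigma>) = (\<integral>\<eta>. max 0 (x i + ?\<xi> \<eta>) \<partial>gauss_noise n \<sigma>)"
    by (simp add: pe)
  also have "\<dots> = (\<integral>y. max 0 (x i + y) \<partial>distr (gauss_noise n \<sigma>) lborel ?\<xi>)"
    by (rule integral_distr[symmetric]) (use distributed_measurable[OF D] in auto)
  also have "distr (gauss_noise n \<sigma>) lborel ?\<xi> = density lborel (normal_density 0 (\<sigma> * sqrt ((real n - 1) / real n)))"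
    by (rule distributed_distr_eq_density[OF D])
  finally show ?thesis unfolding bias_proj_pos_def by simp
qed

theorem proposition2:
  fixes n :: nat and C \<sigma> :: real and x :: "nat \<Rightarrow> real"
  assumes "n \<ge> 2" and "C > 0" and "\<sigma> > 0"
    and "(\<Sum>i<n. x i) = C" and "\<forall>i<n. x i \<ge> 0"
    and "\<forall>i j. i \<le> j \<longrightarrow> j < n \<longrightarrow> x i \<le> x j"
  defines "a \<equiv> (1 / \<sigma>) * sqrt (real n / (real n - 1))"
  shows "bias_proj_pos C n \<sigma> x 0 - bias_proj_pos C n \<sigma> x (n - 1)
           = (LBINT t=-x (n - 1)..-x 0. Phi (a * t))
       \<and> (LBINT t=-x (n - 1)..-x 0. Phi (a * t))
           \<in> {Phi (- a * x (n - 1)) * (x (n - 1) - x 0) .. Phi (- a * x 0) * (x (n - 1) - x 0)}"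
proof -
  define s0 where "s0 = \<sigma> * sqrt ((real n - 1) / real n)"
  have n1: "real n - 1 > 0" using assms(1) by simp
  have s0: "s0 > 0" unfolding s0_def using assms(3) n1 by simp
  have as0: "a = 1 / s0"
    unfolding a_def s0_def using n1 assms(1) by (simp add: real_sqrt_divide field_simps)
  have apos: "a > 0" using as0 s0 by simp
  have x01: "x 0 \<le> x (n - 1)" using assms(1,6) by simp
  have b0: "bias_proj_pos C n \<sigma> x 0 = (\<integral>y. max 0 (x 0 + y) \<partial>density lborel (normal_density 0 s0)) - x 0"
    unfolding s0_def by (rule bias_eq) (use assms in auto)
  have b1: "bias_proj_pos C n \<sigma> x (n - 1) = (\<integral>y. max 0 (x (n - 1) + y) \<partial>density lborel (normal_density 0 s0)) - x (n - 1)"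
    unfolding s0_def by (rule bias_eq) (use assms in auto)
  have I: "(LBINT t=-x (n - 1)..-x 0. Phi (a * t)) = (LBINT t:{-x (n - 1)..-x 0}. Phi (t / s0))"
    using x01 by (simp add: interval_integral_Icc as0)
  have part1: "bias_proj_pos C n \<sigma> x 0 - bias_proj_pos C n \<sigma> x (n - 1) = (LBINT t=-x (n - 1)..-x 0. Phi (a * t))"
    unfolding b0 b1 I by (rule key[OF s0 x01])
  define A where "A = {-x (n - 1)..-x 0}"
  have mPhi[measurable]: "(\<lambda>t. Phi (t / s0)) \<in> borel_measurable borel" by (rule Phi_scaled_meas[OF s0])
  have iP: "integrable lborel (\<lambda>t. indicator A t * Phi (t / s0))"
  proof (rule Bochner_Integration.integrable_bound)
    show "integrable lborel (indicator A :: real \<Rightarrow> real)" by (rule integrable_real_indicator) (use x01 in \<open>auto simp: A_def\<close>)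
    show "(\<lambda>t. indicator A t * Phi (t / s0)) \<in> borel_measurable lborel" by (simp add: A_def)
    show "AE t in lborel. norm (indicator A t * Phi (t / s0)) \<le> norm (indicator A t :: real)"
      by (rule AE_I2) (auto simp: indicator_def Phi_le1 Phi_nonneg abs_of_nonneg)
  qed
  have iA: "integrable lborel (indicator A :: real \<Rightarrow> real)" by (rule integrable_real_indicator) (use x01 in \<open>auto simp: A_def\<close>)
  have mA: "measure lborel A = x (n - 1) - x 0" using x01 by (simp add: A_def)
  have J: "(LBINT t:{-x (n - 1)..-x 0}. Phi (t / s0)) = (\<integral>t. indicator A t * Phi (t / s0) \<partial>lborel)"
    unfolding A_def set_lebesgue_integral_def by simp
  have lo: "Phi (- a * x (n - 1)) * (x (n - 1) - x 0) \<le> (\<integral>t. indicator A t * Phi (t / s0) \<partial>lborel)"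
  proof -
    have "Phi (- a * x (n - 1)) * (x (n - 1) - x 0) = (\<integral>t. indicator A t * Phi (- a * x (n - 1)) \<partial>lborel)"
      using mA by simp
    also have "\<dots> \<le> (\<integral>t. indicator A t * Phi (t / s0) \<partial>lborel)"
    proof (rule integral_mono)
      show "integrable lborel (\<lambda>t. indicator A t * Phi (- a * x (n - 1)))" using iA by simp
      show "integrable lborel (\<lambda>t. indicator A t * Phi (t / s0))" by (rule iP)
      fix t :: real
      show "indicator A t * Phi (- a * x (n - 1)) \<le> indicator A t * Phi (t / s0)"
      proof (cases "t \<in> A")
        case True
        then have "- x (n - 1) / s0 \<le> t / s0" using s0 by (intro divide_right_mono) (auto simp: A_def)
        then have "- a * x (n - 1) \<le> t / s0" by (simp add: as0)
        then show ?thesis using True by (simp add: Phi_mono)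
      qed simp
    qed
    finally show ?thesis .
  qed
  have hi: "(\<integral>t. indicator A t * Phi (t / s0) \<partial>lborel) \<le> Phi (- a * x 0) * (x (n - 1) - x 0)"
  proof -
    have "(\<integral>t. indicator A t * Phi (t / s0) \<partial>lborel) \<le> (\<integral>t. indicator A t * Phi (- a * x 0) \<partial>lborel)"
    proof (rule integral_mono)
      show "integrable lborel (\<lambda>t. indicator A t * Phi (- a * x 0))" using iA by simp
      show "integrable lborel (\<lambda>t. indicator A t * Phi (t / s0))" by (rule iP)
      fix t :: real
      show "indicator A t * Phi (t / s0) \<le> indicator A t * Phi (- a * x 0)"
      proof (cases "t \<in> A")
        case True
        then have "t / s0 \<le> - x 0 / s0" using s0 by (intro divide_right_mono) (auto simp: A_def)
        then have "t / s0 \<le> - a * x 0" by (simp add: as0)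
        then show ?thesis using True by (simp add: Phi_mono)
      qed simp
    qed
    also have "\<dots> = Phi (- a * x 0) * (x (n - 1) - x 0)"
      using mA by simp
    finally show ?thesis .
  qed
  show ?thesis using part1 lo hi I J by simp
qed

end
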